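(* Let $\gamma \in (0,1/6]$, let $n \geq 6$ be an integer, and let $\eta \geq \eta_1 := \max\{n, \frac{32}{\gamma^2}\log(3/\gamma)\}$. Then there exists a dataset $x_1,\dots,x_n$ (in $\mathbb{R}^d$ for some $d$) with $\|x_i\|\le 1$ for all $i$, linearly separable with maximum margin $\gamma$, such that for every integer $t$ with $1 \le t \leq n/(16\gamma)$ there exists $i \in [n]$ with $\langle w_t, x_i\rangle < 0$, where $(w_t)$ is gradient descent with step size $\eta$ on this dataset.
   Context: All labels are $+1$. Linear separability: some $w$ has $\langle w,x_i\rangle>0$ for all $i$. Maximum margin: $\max_{\|w\|=1}\min_i\langle w,x_i\rangle$. Loss $F(w) = \frac{1}{n}\sum_{i=1}^n \log(1+\exp(-\langle w, x_i\rangle))$. Gradient descent with constant step size $\eta$: $w_0 = 0$, $w_{t+1} = w_t - \eta\nabla F(w_t)$. *)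

theory Defs
  imports "HOL-Analysis.Analysis"
begin

text \<open>Vectors in R^d are represented as functions nat => real; only the
coordinates 0..d-1 matter. The dataset is indexed by i < n (x_1..x_n of the paper
become xs 0 .. xs (n-1)). All labels are +1.\<close>

definition inner_d :: "nat \<Rightarrow> (nat \<Rightarrow> real) \<Rightarrow> (nat \<Rightarrow> real) \<Rightarrow> real" where
  "inner_d d u v = (\<Sum>j<d. u j * v j)"

definition norm_d :: "nat \<Rightarrow> (nat \<Rightarrow> real) \<Rightarrow> real" where
  "norm_d d u = sqrt (inner_d d u u)"

definition lin_separable :: "nat \<Rightarrow> nat \<Rightarrow> (nat \<Rightarrow> nat \<Rightarrow> real) \<Rightarrow> bool" where
  "lin_separable d n xs \<longleftrightarrow> (\<exists>w. \<forall>i<n. inner_d d w (xs i) > 0)"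

definition max_margin :: "nat \<Rightarrow> nat \<Rightarrow> (nat \<Rightarrow> nat \<Rightarrow> real) \<Rightarrow> real" where
  "max_margin d n xs =
     (SUP w \<in> {w. norm_d d w = 1}. Min ((\<lambda>i. inner_d d w (xs i)) ` {..<n}))"

definition logloss :: "nat \<Rightarrow> nat \<Rightarrow> (nat \<Rightarrow> nat \<Rightarrow> real) \<Rightarrow> (nat \<Rightarrow> real) \<Rightarrow> real" where
  "logloss d n xs w = (1 / real n) * (\<Sum>i<n. ln (1 + exp (- inner_d d w (xs i))))"

definition grad_logloss :: "nat \<Rightarrow> nat \<Rightarrow> (nat \<Rightarrow> nat \<Rightarrow> real) \<Rightarrow> (nat \<Rightarrow> real) \<Rightarrow> (nat \<Rightarrow> real)" where
  "grad_logloss d n xs w = (\<lambda>j. - (1 / real n) *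
      (\<Sum>i<n. xs i j / (1 + exp (inner_d d w (xs i)))))"

primrec gd :: "nat \<Rightarrow> nat \<Rightarrow> (nat \<Rightarrow> nat \<Rightarrow> real) \<Rightarrow> real \<Rightarrow> nat \<Rightarrow> (nat \<Rightarrow> real)" where
  "gd d n xs \<eta> 0 = (\<lambda>j. 0)"
| "gd d n xs \<eta> (Suc t) =
     (\<lambda>j. gd d n xs \<eta> t j - \<eta> * grad_logloss d n xs (gd d n xs \<eta> t) j)"

end

theory Submission
  imports Defs
begin

lemma inner2: "inner_d 2 u v = u 0 * v 0 + u 1 * v 1"
  by (simp add: inner_d_def numeral_2_eq_2)

lemma sum_first_rest:
  fixes f :: "nat \<Rightarrow> real"
  assumes "n \<ge> 1"
  shows "(\<Sum>i<n. f i) = f 0 + (\<Sum>i<n - 1. f (Suc i))"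
proof -
  obtain k where "n = Suc k" using assms by (cases n) auto
  then show ?thesis by (metis diff_Suc_1 sum.lessThan_Suc_shift)
qed

theorem lemma11:
  fixes \<gamma> \<eta> :: real and n :: nat
  assumes "0 < \<gamma>" and "\<gamma> \<le> 1/6"
    and "n \<ge> 6"
    and "\<eta> \<ge> max (real n) (32 / \<gamma>^2 * ln (3 / \<gamma>))"
  shows "\<exists>(d::nat) (xs :: nat \<Rightarrow> nat \<Rightarrow> real).
           (\<forall>i<n. norm_d d (xs i) \<le> 1)
         \<and> lin_separable d n xs
         \<and> max_margin d n xs = \<gamma>
         \<and> (\<forall>t::nat. 1 \<le> t \<and> real t \<le> real n / (16 * \<gamma>) \<longrightarrow>
               (\<exists>i<n. inner_d d (gd d n xs \<eta> t) (xs i) < 0))"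
proof -
  define xs :: "nat \<Rightarrow> nat \<Rightarrow> real" where
    "xs i j = (if j = 0 then \<gamma> else if i = 0 then \<gamma> else -1/2)" for i j
  have g0: "0 < \<gamma>" "\<gamma> \<le> 1/6" using assms by auto
  have npos: "real n \<ge> 6" using assms(3) by simp
  have etapos: "\<eta> > 0" using assms(4) npos by linarith
  have norms: "\<forall>i<n. norm_d 2 (xs i) \<le> 1"
  proof (intro allI impI)
    fix i assume "i < n"
    have "\<gamma>^2 \<le> (1/6)^2" using g0 by (intro power_mono) auto
    then have "\<gamma> * \<gamma> \<le> 1/36" by (simp add: power2_eq_square)
    then have "inner_d 2 (xs i) (xs i) \<le> 1"
      by (simp add: inner2 xs_def)
    then show "norm_d 2 (xs i) \<le> 1" by (simp add: norm_d_def)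
  qed
  define e0 :: "nat \<Rightarrow> real" where "e0 j = (if j = 0 then 1 else 0)" for j
  have e0x: "inner_d 2 e0 (xs i) = \<gamma>" for i by (simp add: inner2 e0_def xs_def)
  have sep: "lin_separable 2 n xs"
    unfolding lin_separable_def by (rule exI[of _ e0]) (simp add: e0x g0)
  have mm: "max_margin 2 n xs = \<gamma>"
  proof -
    let ?f = "\<lambda>w. Min ((\<lambda>i. inner_d 2 w (xs i)) ` {..<n})"
    have "0 \<in> {..<n}" using assms(3) by simp
    then have ne: "{..<n} \<noteq> {}" by blast
    have fe0: "?f e0 = \<gamma>"
    proof -
      have "(\<lambda>i. inner_d 2 e0 (xs i)) ` {..<n} = {\<gamma>}" using e0x ne by auto
      then show ?thesis by simp
    qed
    have e0n: "norm_d 2 e0 = 1" by (simp add: norm_d_def inner2 e0_def)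
    have ub: "?f w \<le> \<gamma>" if "norm_d 2 w = 1" for w
    proof -
      have "w 0 * w 0 + w 1 * w 1 = 1" using that by (simp add: norm_d_def inner2)
      then have h: "w 0 * w 0 \<le> 1" using zero_le_square[of "w 1"] by linarith
      have w0: "w 0 \<le> 1"
      proof (rule ccontr)
        assume "\<not> w 0 \<le> 1"
        then have "1 < w 0" by simp
        then have "1 * 1 < w 0 * w 0" by (intro mult_strict_mono) auto
        then show False using h by simp
      qed
      have a0: "?f w \<le> inner_d 2 w (xs 0)"
        using assms(3) by (intro Min_le) auto
      have a: "?f w \<le> \<gamma> * w 0 + \<gamma> * w 1"
        using a0 by (simp add: inner2 xs_def mult.commute)
      have b0: "?f w \<le> inner_d 2 w (xs 1)"
        using assms(3) by (intro Min_le) auto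
      have b: "?f w \<le> \<gamma> * w 0 - w 1 / 2"
        using b0 by (simp add: inner2 xs_def mult.commute)
      have "(1/2) * ?f w + \<gamma> * ?f w \<le> (1/2) * (\<gamma> * w 0 + \<gamma> * w 1) + \<gamma> * (\<gamma> * w 0 - w 1 / 2)"
      proof -
        have "(1/2) * ?f w \<le> (1/2) * (\<gamma> * w 0 + \<gamma> * w 1)" using a by simp
        moreover have "\<gamma> * ?f w \<le> \<gamma> * (\<gamma> * w 0 - w 1 / 2)"
          using b g0 by (intro mult_left_mono) auto
        ultimately show ?thesis by linarith
      qed
      also have "\<dots> = (1/2 + \<gamma>) * (\<gamma> * w 0)" by (simp add: algebra_simps)
      also have "\<dots> \<le> (1/2 + \<gamma>) * \<gamma>" using w0 g0 by (simp add: mult_left_mono)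
      finally have "(1/2 + \<gamma>) * ?f w \<le> (1/2 + \<gamma>) * \<gamma>" by (simp add: algebra_simps)
      moreover have "0 < 1/2 + \<gamma>" using g0 by simp
      ultimately show ?thesis by (simp add: mult_le_cancel_left_pos)
    qed
    show ?thesis unfolding max_margin_def
      apply (rule cSup_eq_maximum)
      using fe0 e0n ub by force+
  qed
  define W where "W = gd 2 n xs \<eta>"
  define m where "m t = inner_d 2 (W t) (xs 0)" for t
  define g where "g t i = 1 / (1 + exp (inner_d 2 (W t) (xs i)))" for t i
  have Wsuc: "W (Suc t) j = W t j + \<eta> / n * (\<Sum>i<n. xs i j * g t i)" for t j
    by (simp add: W_def g_def grad_logloss_def)
  have msuc: "m (Suc t) = m t + \<eta> / n * (\<Sum>i<n. \<gamma> * (xs i 0 + xs i 1) * g t i)" for t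
  proof -
    have "m (Suc t) = m t + \<eta> / n * ((\<Sum>i<n. xs i 0 * g t i) * \<gamma> + (\<Sum>i<n. xs i 1 * g t i) * \<gamma>)"
      by (simp add: m_def inner2 Wsuc algebra_simps) (simp add: xs_def)
    also have "(\<Sum>i<n. xs i 0 * g t i) * \<gamma> + (\<Sum>i<n. xs i 1 * g t i) * \<gamma>
        = (\<Sum>i<n. \<gamma> * (xs i 0 + xs i 1) * g t i)"
      by (simp add: sum_distrib_right sum.distrib algebra_simps sum_distrib_left)
    finally show ?thesis .
  qed
  have gpos: "0 < g t i" "g t i \<le> 1" for t i
    by (auto simp: g_def add_pos_pos)
  have step: "m (Suc t) \<le> m t + \<eta> / n * (2 * \<gamma>^2)" for t
  proof -
    have "(\<Sum>i<n. \<gamma> * (xs i 0 + xs i 1) * g t i) \<le> (\<Sum>i<n. if i = 0 then 2 * \<gamma>^2 else 0)"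
    proof (rule sum_mono)
      fix i assume "i \<in> {..<n}"
      show "\<gamma> * (xs i 0 + xs i 1) * g t i \<le> (if i = 0 then 2 * \<gamma>^2 else 0)"
      proof (cases "i = 0")
        case True
        then show ?thesis using gpos[of t i] g0
          by (simp add: xs_def power2_eq_square mult_left_le)
      next
        case False
        have "\<gamma> * (\<gamma> - 1/2) \<le> 0" using g0 by (simp add: mult_nonneg_nonpos)
        then show ?thesis using False gpos[of t i]
          by (simp add: xs_def mult_nonpos_nonneg)
      qed
    qed
    also have "\<dots> = 2 * \<gamma>^2" using assms(3) by simp
    finally show ?thesis using msuc[of t] etapos
      by (smt (verit) mult_left_mono divide_nonneg_nonneg of_nat_0_le_iff)
  qed
  have m1: "m 1 = \<eta> / n * (\<gamma> * (2 * \<gamma> + (real n - 1) * (\<gamma> - 1/2)) / 2)"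
  proof -
    have g00: "g 0 i = 1/2" for i by (simp add: g_def W_def inner2)
    have "(\<Sum>i<n. \<gamma> * (xs i 0 + xs i 1) * g 0 i)
        = \<gamma> * (2 * \<gamma>) / 2 + (\<Sum>i<n - 1. \<gamma> * (\<gamma> - 1/2) / 2)"
      using assms(3) by (subst sum_first_rest) (auto simp: g00 xs_def)
    also have "\<dots> = \<gamma> * (2 * \<gamma>) / 2 + real (n - 1) * (\<gamma> * (\<gamma> - 1/2) / 2)"
      by simp
    also have "\<dots> = \<gamma> * (2 * \<gamma>) / 2 + (real n - 1) * (\<gamma> * (\<gamma> - 1/2) / 2)"
      using assms(3) by (simp add: of_nat_diff)
    also have "\<dots> = \<gamma> * (2 * \<gamma> + (real n - 1) * (\<gamma> - 1/2)) / 2"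
      by (simp add: field_simps)
    finally have S: "(\<Sum>i<n. \<gamma> * (xs i 0 + xs i 1) * g 0 i) = \<gamma> * (2 * \<gamma> + (real n - 1) * (\<gamma> - 1/2)) / 2" .
    have "m 0 = 0" by (simp add: m_def W_def inner2)
    then show ?thesis using msuc[of 0, unfolded S] by simp
  qed
  have mt: "m (Suc k) \<le> m 1 + real k * (\<eta> / n * (2 * \<gamma>^2))" for k
  proof (induction k)
    case 0 then show ?case by simp
  next
    case (Suc k)
    have "real (Suc k) * (\<eta> / n * (2 * \<gamma>^2)) = \<eta> / n * (2 * \<gamma>^2) + real k * (\<eta> / n * (2 * \<gamma>^2))"
      by (simp add: distrib_right add_divide_distrib)
    then show ?case using step[of "Suc k"] Suc.IH by linarith
  qed
  have neg: "m t < 0" if t1: "1 \<le> t" and t2: "real t \<le> real n / (16 * \<gamma>)" for t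
  proof -
    obtain k where tk: "t = Suc k" using t1 by (cases t) auto
    have "16 * \<gamma> * real t \<le> real n" using t2 g0 by (simp add: field_simps)
    then have "16 * \<gamma> * (1 + real k) \<le> real n" using tk by simp
    then have "\<gamma> * (16 * \<gamma> * (1 + real k)) \<le> \<gamma> * real n"
      using g0 by (intro mult_left_mono) auto
    then have kb: "2 * \<gamma>^2 * real k \<le> \<gamma> * (real n / 8 - 2 * \<gamma>)"
      by (simp add: algebra_simps power2_eq_square)
    have nb: "(real n - 1) * \<gamma> \<le> (real n - 1) / 6" using g0 npos by simp
    have br: "\<gamma> * (2 * \<gamma> + (real n - 1) * (\<gamma> - 1/2)) / 2 + real k * (2 * \<gamma>^2) < 0"
    proof -
      have "\<gamma> * (2 * \<gamma> + (real n - 1) * (\<gamma> - 1/2)) / 2 + real k * (2 * \<gamma>^2)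
          \<le> \<gamma> * (2 * \<gamma> + (real n - 1) * (\<gamma> - 1/2)) / 2 + \<gamma> * (real n / 8 - 2 * \<gamma>)"
        using kb by (simp add: algebra_simps)
      also have "\<dots> = \<gamma> * ((real n - 1) * \<gamma> / 2 - (real n - 1) / 4 + real n / 8 - \<gamma>)"
        by (simp add: field_simps)
      also have "\<dots> < 0"
      proof -
        have "(real n - 1) * \<gamma> / 2 - (real n - 1) / 4 + real n / 8 - \<gamma> < 0"
        proof -
          define P where "P = (real n - 1) * \<gamma>"
          have "P \<le> (real n - 1) / 6" using nb unfolding P_def .
          then have "P / 2 - (real n - 1) / 4 + real n / 8 - \<gamma> < 0" using npos g0 by argo
          then show ?thesis unfolding P_def .
        qed
        then show ?thesis using g0 by (simp add: mult_pos_neg)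
      qed
      finally show ?thesis .
    qed
    have "m t \<le> m 1 + real k * (\<eta> / n * (2 * \<gamma>^2))" using mt[of k] tk by simp
    also have "\<dots> = \<eta> / n * (\<gamma> * (2 * \<gamma> + (real n - 1) * (\<gamma> - 1/2)) / 2 + real k * (2 * \<gamma>^2))"
      unfolding m1 by (simp only: ring_distribs mult_ac)
    also have "\<dots> < 0"
    proof (rule mult_pos_neg)
      show "0 < \<eta> / real n" using etapos npos by simp
    qed (rule br)
    finally show ?thesis .
  qed
  show ?thesis
    apply (rule exI[of _ 2], rule exI[of _ xs])
    using norms sep mm neg assms(3) unfolding m_def W_def by fastforce
qed

end
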